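(* Let $G$ be a group and $P,Q\in G$, and put $A=PQ$. Call a finite sequence $P_0,P_1,\dots,P_m$ ($m\ge 1$) of elements of $G$ a chain if $P_i\neq P_{i+1}$ and $P_i\neq P_{i+2}$ whenever these indices are in range, and $\{P_iP_{i+1},P_{i+1}P_i\}=\{P_0P_1,P_1P_0\}$ for all $0\le i<m$. Then: (a) if $m\ge 3$ and $P_0,\dots,P_m$ is a chain with $P_0=P$, $P_1=Q$, then (1) $PQ\neq QP$, (2) $PQ^2=Q^2P$, (3) $P^2Q=QP^2$, and for all $0\le i\le m$, $P_i=A^{-i/2}PA^{i/2}$ and $P_i^2=P^2$ if $i$ is even, while $P_i=A^{-(i-1)/2}QA^{(i-1)/2}$ and $P_i^2=Q^2$ if $i$ is odd; (b) conversely, if $P,Q$ satisfy (1), (2), (3), then for every $m\ge 3$ the sequence defined by $P_i=A^{-i/2}PA^{i/2}$ ($i$ even), $P_i=A^{-(i-1)/2}QA^{(i-1)/2}$ ($i$ odd), $0\le i\le m$, is a chain with $P_0=P$, $P_1=Q$, and its terms satisfy $P_i^2=P^2$ for $i$ even and $P_i^2=Q^2$ for $i$ odd.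
   Context: In the group cograph of $G$, the points are the elements of $G$ and the edge joining distinct $P,Q$ is $\{PQ,QP\}$; a chain is thus a sequence of points in which consecutive pairs are all joined by the same edge. *)

theory Defs
  imports "HOL-Algebra.Group"
begin

text \<open>A chain of length m (points P 0, ..., P m) in the group cograph of G.
  Only the values of Ps at indices 0..m matter.\<close>
definition is_chain :: "('a, 'b) monoid_scheme \<Rightarrow> (nat \<Rightarrow> 'a) \<Rightarrow> nat \<Rightarrow> bool" where
  "is_chain G Ps m \<longleftrightarrow>
     1 \<le> m \<and>
     (\<forall>i\<le>m. Ps i \<in> carrier G) \<and>
     (\<forall>i. i + 1 \<le> m \<longrightarrow> Ps i \<noteq> Ps (i + 1)) \<and>
     (\<forall>i. i + 2 \<le> m \<longrightarrow> Ps i \<noteq> Ps (i + 2)) \<and>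
     (\<forall>i<m. {Ps i \<otimes>\<^bsub>G\<^esub> Ps (i + 1), Ps (i + 1) \<otimes>\<^bsub>G\<^esub> Ps i}
             = {Ps 0 \<otimes>\<^bsub>G\<^esub> Ps 1, Ps 1 \<otimes>\<^bsub>G\<^esub> Ps 0})"

text \<open>The explicit sequence: P_i = A^(-i/2) P A^(i/2) for i even,
  P_i = A^(-(i-1)/2) Q A^((i-1)/2) for i odd, where A = P Q.
  For both parities the exponent is i div 2.\<close>
definition conj_seq :: "('a, 'b) monoid_scheme \<Rightarrow> 'a \<Rightarrow> 'a \<Rightarrow> nat \<Rightarrow> 'a" where
  "conj_seq G P Q i =
     (let A = P \<otimes>\<^bsub>G\<^esub> Q; k = i div 2 in
      inv\<^bsub>G\<^esub> (A [^]\<^bsub>G\<^esub> k) \<otimes>\<^bsub>G\<^esub> (if even i then P else Q) \<otimes>\<^bsub>G\<^esub> (A [^]\<^bsub>G\<^esub> k))"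

end

theory Submission
  imports Defs
begin
context group begin
lemma sq: "x \<in> carrier G \<Longrightarrow> x [^] (2::nat) = x \<otimes> x"
  by (simp add: numeral_2_eq_2)
lemma ic1 [simp]: "x \<in> carrier G \<Longrightarrow> y \<in> carrier G \<Longrightarrow> inv x \<otimes> (x \<otimes> y) = y"
  by (simp add: m_assoc[symmetric])
lemma ic2 [simp]: "x \<in> carrier G \<Longrightarrow> y \<in> carrier G \<Longrightarrow> x \<otimes> (inv x \<otimes> y) = y"
  by (simp add: m_assoc[symmetric])
lemma cs_closed: "P \<in> carrier G \<Longrightarrow> Q \<in> carrier G \<Longrightarrow> conj_seq G P Q i \<in> carrier G"
  by (simp add: conj_seq_def Let_def)
lemma cs_Suc:
  assumes P: "P \<in> carrier G" and Q: "Q \<in> carrier G"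
  shows "conj_seq G P Q (Suc i) = inv (conj_seq G P Q i) \<otimes> (P \<otimes> Q)"
proof -
  define k where "k = i div 2"
  define c where "c = (P \<otimes> Q) [^] k"
  have c: "c \<in> carrier G" using P Q by (simp add: c_def)
  have cA: "c \<otimes> (P \<otimes> Q) = (P \<otimes> Q) \<otimes> c" unfolding c_def
    using P Q by (metis m_closed nat_pow_Suc nat_pow_Suc2)
  show ?thesis
  proof (cases "even i")
    case True
    then have "Suc i div 2 = k" "odd (Suc i)" by (auto simp: k_def)
    then have "conj_seq G P Q (Suc i) = inv c \<otimes> Q \<otimes> c" "conj_seq G P Q i = inv c \<otimes> P \<otimes> c"
      using True by (auto simp: conj_seq_def Let_def c_def k_def)
    moreover have "inv (inv c \<otimes> P \<otimes> c) \<otimes> (P \<otimes> Q) = inv c \<otimes> Q \<otimes> c"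
      using P Q c cA by (simp add: inv_mult_group m_assoc[symmetric]) (simp add: m_assoc)
    ultimately show ?thesis by simp
  next
    case False
    then have "Suc i div 2 = Suc k" "even (Suc i)" by (auto simp: k_def elim!: oddE)
    then have "conj_seq G P Q (Suc i) = inv (c \<otimes> (P \<otimes> Q)) \<otimes> P \<otimes> (c \<otimes> (P \<otimes> Q))" "conj_seq G P Q i = inv c \<otimes> Q \<otimes> c"
      using False by (auto simp: conj_seq_def Let_def c_def k_def)
    moreover have "inv (inv c \<otimes> Q \<otimes> c) \<otimes> (P \<otimes> Q) = inv (c \<otimes> (P \<otimes> Q)) \<otimes> P \<otimes> (c \<otimes> (P \<otimes> Q))"
      using P Q c cA by (simp add: inv_mult_group m_assoc[symmetric]) (simp add: m_assoc)
    ultimately show ?thesis by simp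
  qed
qed

lemma cs_0: "P \<in> carrier G \<Longrightarrow> conj_seq G P Q 0 = P"
  by (simp add: conj_seq_def)
lemma cs_1: "P \<in> carrier G \<Longrightarrow> Q \<in> carrier G \<Longrightarrow> conj_seq G P Q 1 = Q"
  by (simp add: conj_seq_def)
lemma conj_mult: "c \<in> carrier G \<Longrightarrow> y \<in> carrier G \<Longrightarrow> z \<in> carrier G \<Longrightarrow>
   (inv c \<otimes> y \<otimes> c) \<otimes> (inv c \<otimes> z \<otimes> c) = inv c \<otimes> (y \<otimes> z) \<otimes> c"
  by (simp add: m_assoc)
lemma conj_inv: "c \<in> carrier G \<Longrightarrow> y \<in> carrier G \<Longrightarrow>
   inv (inv c \<otimes> y \<otimes> c) = inv c \<otimes> inv y \<otimes> c"
  by (simp add: inv_mult_group m_assoc)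
lemma conj_id: "c \<in> carrier G \<Longrightarrow> y \<in> carrier G \<Longrightarrow> y \<otimes> c = c \<otimes> y \<Longrightarrow>
   inv c \<otimes> y \<otimes> c = y"
  by (simp add: m_assoc)
lemma cs_form:
  assumes P: "P \<in> carrier G" and Q: "Q \<in> carrier G"
  shows "\<exists>k X. X \<in> {P, Q} \<and> conj_seq G P Q i = inv ((P \<otimes> Q) [^] (k::nat)) \<otimes> X \<otimes> (P \<otimes> Q) [^] k
     \<and> (even i \<longrightarrow> X = P) \<and> (odd i \<longrightarrow> X = Q)"
  by (auto simp: conj_seq_def Let_def)

lemma key:
  assumes P: "P \<in> carrier G" and Q: "Q \<in> carrier G"
   and r2: "P \<otimes> (Q [^] (2::nat)) = (Q [^] (2::nat)) \<otimes> P"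
   and r3: "(P [^] (2::nat)) \<otimes> Q = Q \<otimes> (P [^] (2::nat))"
  shows "conj_seq G P Q (Suc i) \<otimes> conj_seq G P Q i = Q \<otimes> P"
    "even i \<Longrightarrow> conj_seq G P Q i [^] (2::nat) = P [^] (2::nat)"
    "odd i \<Longrightarrow> conj_seq G P Q i [^] (2::nat) = Q [^] (2::nat)"
proof -
  have r2': "P \<otimes> (Q \<otimes> Q) = Q \<otimes> (Q \<otimes> P)" using r2 P Q by (simp add: sq m_assoc)
  have r3': "P \<otimes> (P \<otimes> Q) = Q \<otimes> (P \<otimes> P)" using r3 P Q by (simp add: sq m_assoc)
  obtain k X where X: "X \<in> {P, Q}" and cs: "conj_seq G P Q i = inv ((P \<otimes> Q) [^] (k::nat)) \<otimes> X \<otimes> (P \<otimes> Q) [^] k"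
     and ev: "even i \<longrightarrow> X = P" and od: "odd i \<longrightarrow> X = Q"
    using cs_form[OF P Q] by blast
  define c where "c = (P \<otimes> Q) [^] k"
  have c: "c \<in> carrier G" using P Q by (simp add: c_def)
  have Xc: "X \<in> carrier G" using X P Q by auto
  have cA: "(P \<otimes> Q) \<otimes> c = c \<otimes> (P \<otimes> Q)" unfolding c_def
    using P Q by (metis m_closed nat_pow_Suc nat_pow_Suc2)
  have QPA: "(Q \<otimes> P) \<otimes> (P \<otimes> Q) = (P \<otimes> Q) \<otimes> (Q \<otimes> P)"
  proof -
    have "(Q \<otimes> P) \<otimes> (P \<otimes> Q) = Q \<otimes> (P \<otimes> (P \<otimes> Q))" using P Q by (simp add: m_assoc)
    also have "\<dots> = Q \<otimes> (Q \<otimes> (P \<otimes> P))" using r3' by simp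
    also have "\<dots> = (Q \<otimes> (Q \<otimes> P)) \<otimes> P" using P Q by (simp add: m_assoc)
    also have "\<dots> = (P \<otimes> (Q \<otimes> Q)) \<otimes> P" using r2' by simp
    also have "\<dots> = (P \<otimes> Q) \<otimes> (Q \<otimes> P)" using P Q by (simp add: m_assoc)
    finally show ?thesis .
  qed
  have QPc: "(Q \<otimes> P) \<otimes> c = c \<otimes> (Q \<otimes> P)" unfolding c_def
    using P Q QPA by (simp add: group_commutes_pow[symmetric])
  have XAX: "inv X \<otimes> (P \<otimes> Q) \<otimes> X = Q \<otimes> P"
  proof (cases "X = P")
    case True then show ?thesis using P Q by (simp add: m_assoc)
  next
    case False then have "X = Q" using X by auto
    then show ?thesis using P Q r2' by (simp add: m_assoc)
  qed
  have "conj_seq G P Q (Suc i) \<otimes> conj_seq G P Q i = inv (conj_seq G P Q i) \<otimes> (P \<otimes> Q) \<otimes> conj_seq G P Q i"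
    by (simp add: cs_Suc P Q)
  also have "\<dots> = (inv c \<otimes> inv X \<otimes> c) \<otimes> (inv c \<otimes> (P \<otimes> Q) \<otimes> c) \<otimes> (inv c \<otimes> X \<otimes> c)"
    using cs c P Q Xc cA by (simp add: c_def conj_inv conj_id)
  also have "\<dots> = inv c \<otimes> (inv X \<otimes> (P \<otimes> Q) \<otimes> X) \<otimes> c"
    using c P Q Xc by (simp add: conj_mult)
  also have "\<dots> = Q \<otimes> P" using XAX conj_id[OF c _ QPc] P Q by simp
  finally show "conj_seq G P Q (Suc i) \<otimes> conj_seq G P Q i = Q \<otimes> P" .
  have sqc: "conj_seq G P Q i [^] (2::nat) = inv c \<otimes> (X \<otimes> X) \<otimes> c"
    using cs c Xc by (simp add: sq c_def conj_mult)
  have PPA: "(P \<otimes> P) \<otimes> (P \<otimes> Q) = (P \<otimes> Q) \<otimes> (P \<otimes> P)"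
    using P Q r3' by (simp add: m_assoc)
  have QQA: "(Q \<otimes> Q) \<otimes> (P \<otimes> Q) = (P \<otimes> Q) \<otimes> (Q \<otimes> Q)"
    using P Q r2' by (simp add: m_assoc[symmetric])
  show "even i \<Longrightarrow> conj_seq G P Q i [^] (2::nat) = P [^] (2::nat)"
  proof -
    assume "even i" then have "X = P" using ev by simp
    moreover have "(P \<otimes> P) \<otimes> c = c \<otimes> (P \<otimes> P)" unfolding c_def
      using P Q PPA by (simp add: group_commutes_pow[symmetric])
    ultimately show ?thesis using sqc conj_id c P by (simp add: sq)
  qed
  show "odd i \<Longrightarrow> conj_seq G P Q i [^] (2::nat) = Q [^] (2::nat)"
  proof -
    assume "odd i" then have "X = Q" using od by simp
    moreover have "(Q \<otimes> Q) \<otimes> c = c \<otimes> (Q \<otimes> Q)" unfolding c_def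
      using P Q QQA by (simp add: group_commutes_pow[symmetric])
    ultimately show ?thesis using sqc conj_id c Q by (simp add: sq)
  qed
qed

lemma cs_AB:
  assumes P: "P \<in> carrier G" and Q: "Q \<in> carrier G"
  shows "conj_seq G P Q i \<otimes> conj_seq G P Q (Suc i) = P \<otimes> Q"
  using P Q by (simp add: cs_Suc cs_closed)

lemma part_b:
  assumes P: "P \<in> carrier G" and Q: "Q \<in> carrier G"
   and r1: "P \<otimes> Q \<noteq> Q \<otimes> P"
   and r2: "P \<otimes> (Q [^] (2::nat)) = (Q [^] (2::nat)) \<otimes> P"
   and r3: "(P [^] (2::nat)) \<otimes> Q = Q \<otimes> (P [^] (2::nat))"
   and m: "1 \<le> m"
  shows "is_chain G (conj_seq G P Q) m"
proof -
  let ?x = "conj_seq G P Q"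
  have ba: "?x (Suc i) \<otimes> ?x i = Q \<otimes> P" for i using key(1)[OF P Q r2 r3] .
  have ab: "?x i \<otimes> ?x (Suc i) = P \<otimes> Q" for i using cs_AB[OF P Q] .
  have d1: "?x i \<noteq> ?x (i + 1)" for i
  proof
    assume "?x i = ?x (i + 1)"
    then have "P \<otimes> Q = Q \<otimes> P" using ab[of i] ba[of i] by simp
    then show False using r1 by simp
  qed
  have d2: "?x i \<noteq> ?x (i + 2)" for i
  proof
    assume h: "?x i = ?x (i + 2)"
    have "?x (Suc i) \<otimes> ?x i = ?x (Suc i) \<otimes> ?x (Suc (Suc i))" using h by simp
    then have "P \<otimes> Q = Q \<otimes> P" using ab[of "Suc i"] ba[of i] by simp
    then show False using r1 by simp
  qed
  have se: "{?x i \<otimes> ?x (i + 1), ?x (i + 1) \<otimes> ?x i} = {?x 0 \<otimes> ?x 1, ?x 1 \<otimes> ?x 0}" for i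
    using ab[of i] ba[of i] cs_0[OF P] cs_1[OF P Q] by simp
  show ?thesis unfolding is_chain_def using m d1 d2 se cs_closed[OF P Q] by blast
qed

lemma part_a:
  assumes P: "P \<in> carrier G" and Q: "Q \<in> carrier G"
   and m: "3 \<le> m" and ch: "is_chain G Ps m" and P0: "Ps 0 = P" and P1: "Ps 1 = Q"
  shows "P \<otimes> Q \<noteq> Q \<otimes> P" "P \<otimes> (Q [^] (2::nat)) = (Q [^] (2::nat)) \<otimes> P"
    "(P [^] (2::nat)) \<otimes> Q = Q \<otimes> (P [^] (2::nat))" "\<And>i. i \<le> m \<Longrightarrow> Ps i = conj_seq G P Q i"
proof -
  have car: "\<And>i. i \<le> m \<Longrightarrow> Ps i \<in> carrier G" using ch unfolding is_chain_def by blast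
  have d1: "\<And>i. i + 1 \<le> m \<Longrightarrow> Ps i \<noteq> Ps (i + 1)" using ch unfolding is_chain_def by blast
  have d2: "\<And>i. i + 2 \<le> m \<Longrightarrow> Ps i \<noteq> Ps (i + 2)" using ch unfolding is_chain_def by blast
  have se: "\<And>i. i < m \<Longrightarrow> {Ps i \<otimes> Ps (i + 1), Ps (i + 1) \<otimes> Ps i} = {P \<otimes> Q, Q \<otimes> P}"
    using ch P0 P1 unfolding is_chain_def by simp
  show r1: "P \<otimes> Q \<noteq> Q \<otimes> P"
  proof
    assume h: "P \<otimes> Q = Q \<otimes> P"
    have "Q \<otimes> Ps 2 = Q \<otimes> P" using se[of 1] m h P1 by (simp add: numeral_2_eq_2 doubleton_eq_iff)
    then have "Ps 2 = P" using car[of 2] m P Q by simp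
    then show False using d2[of 0] m P0 by (simp add: numeral_2_eq_2)
  qed
  have step: "i < m \<Longrightarrow> Ps i \<otimes> Ps (Suc i) = P \<otimes> Q \<and> Ps (Suc i) \<otimes> Ps i = Q \<otimes> P" for i
  proof (induction i)
    case 0
    then show ?case using se[of 0] P0 P1 r1 by (auto simp: doubleton_eq_iff)
  next
    case (Suc i)
    then have IH: "Ps (Suc i) \<otimes> Ps i = Q \<otimes> P" by simp
    have "Ps (Suc i) \<otimes> Ps (Suc (Suc i)) \<noteq> Q \<otimes> P"
    proof
      assume "Ps (Suc i) \<otimes> Ps (Suc (Suc i)) = Q \<otimes> P"
      then have "Ps (Suc i) \<otimes> Ps (Suc (Suc i)) = Ps (Suc i) \<otimes> Ps i" using IH by simp
      then have "Ps (Suc (Suc i)) = Ps i" using car[of i] car[of "Suc i"] car[of "Suc (Suc i)"] Suc.prems by simp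
      then show False using d2[of i] Suc.prems by simp
    qed
    then show ?case using se[of "Suc i"] Suc.prems r1 by (auto simp: doubleton_eq_iff)
  qed
  have rec: "i < m \<Longrightarrow> Ps (Suc i) = inv (Ps i) \<otimes> (P \<otimes> Q)" for i
    using step[of i] car[of i] car[of "Suc i"] P Q by (metis Suc_leI inv_solve_left less_imp_le m_closed)
  show eq: "\<And>i. i \<le> m \<Longrightarrow> Ps i = conj_seq G P Q i"
  proof -
    fix i assume "i \<le> m" then show "Ps i = conj_seq G P Q i"
    proof (induction i)
      case 0 then show ?case using P0 cs_0[OF P] by simp
    next
      case (Suc i) then show ?case using rec[of i] cs_Suc[OF P Q] by simp
    qed
  qed
  have x2: "Ps 2 = inv Q \<otimes> P \<otimes> Q"
    using rec[of 1] m P1 P Q by (simp add: numeral_2_eq_2 m_assoc)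
  have s1: "Ps 2 \<otimes> Ps 1 = Q \<otimes> P" using step[of 1] m by (simp add: numeral_2_eq_2)
  have r2': "P \<otimes> (Q \<otimes> Q) = Q \<otimes> (Q \<otimes> P)"
  proof -
    have "inv Q \<otimes> (P \<otimes> (Q \<otimes> Q)) = Q \<otimes> P" using s1 x2 P1 P Q by (simp add: m_assoc)
    then show ?thesis using P Q by (simp add: inv_solve_left' m_assoc)
  qed
  then show "P \<otimes> (Q [^] (2::nat)) = (Q [^] (2::nat)) \<otimes> P" using P Q by (simp add: sq m_assoc)
  have s2: "Ps 3 \<otimes> Ps 2 = Q \<otimes> P" using step[of 2] m by (simp add: numeral_3_eq_3 numeral_2_eq_2)
  have x3: "Ps 3 = inv (Ps 2) \<otimes> (P \<otimes> Q)"
    using rec[of 2] m by (simp add: numeral_3_eq_3 numeral_2_eq_2)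
  have c2: "Ps 2 \<in> carrier G" using car[of 2] m by simp
  have "inv (Ps 2) \<otimes> ((P \<otimes> Q) \<otimes> Ps 2) = Q \<otimes> P" using s2 x3 c2 P Q by (simp add: m_assoc)
  then have "(P \<otimes> Q) \<otimes> Ps 2 = Ps 2 \<otimes> (Q \<otimes> P)" using c2 P Q by (simp add: inv_solve_left')
  then have "P \<otimes> (P \<otimes> Q) = inv Q \<otimes> (P \<otimes> (Q \<otimes> (Q \<otimes> P)))" using x2 P Q by (simp add: m_assoc)
  also have "\<dots> = inv Q \<otimes> (Q \<otimes> (Q \<otimes> (P \<otimes> P)))" using r2' P Q by (simp add: m_assoc[symmetric])
  also have "\<dots> = Q \<otimes> (P \<otimes> P)" using P Q by simp
  finally show "(P [^] (2::nat)) \<otimes> Q = Q \<otimes> (P [^] (2::nat))" using P Q by (simp add: sq m_assoc)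
qed
end


theorem theorem6p2:
  fixes G (structure) and P Q :: 'a
  assumes "group G" and "P \<in> carrier G" and "Q \<in> carrier G"
  shows "(\<forall>(Ps :: nat \<Rightarrow> 'a) m. 3 \<le> m \<and> is_chain G Ps m \<and> Ps 0 = P \<and> Ps 1 = Q \<longrightarrow>
            P \<otimes> Q \<noteq> Q \<otimes> P \<and>
            P \<otimes> (Q [^] (2::nat)) = (Q [^] (2::nat)) \<otimes> P \<and>
            (P [^] (2::nat)) \<otimes> Q = Q \<otimes> (P [^] (2::nat)) \<and>
            (\<forall>i\<le>m. (even i \<longrightarrow>
                        Ps i = inv ((P \<otimes> Q) [^] (i div 2)) \<otimes> P \<otimes> ((P \<otimes> Q) [^] (i div 2)) \<and>
                        Ps i [^] (2::nat) = P [^] (2::nat)) \<and>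
                      (odd i \<longrightarrow>
                        Ps i = inv ((P \<otimes> Q) [^] ((i - 1) div 2)) \<otimes> Q \<otimes> ((P \<otimes> Q) [^] ((i - 1) div 2)) \<and>
                        Ps i [^] (2::nat) = Q [^] (2::nat))))
       \<and>
         (P \<otimes> Q \<noteq> Q \<otimes> P \<and>
          P \<otimes> (Q [^] (2::nat)) = (Q [^] (2::nat)) \<otimes> P \<and>
          (P [^] (2::nat)) \<otimes> Q = Q \<otimes> (P [^] (2::nat)) \<longrightarrow>
          (\<forall>m::nat. 3 \<le> m \<longrightarrow>
             is_chain G (conj_seq G P Q) m \<and>
             conj_seq G P Q 0 = P \<and> conj_seq G P Q 1 = Q \<and>
             (\<forall>i\<le>m. (even i \<longrightarrow> conj_seq G P Q i [^] (2::nat) = P [^] (2::nat)) \<and>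
                      (odd i \<longrightarrow> conj_seq G P Q i [^] (2::nat) = Q [^] (2::nat)))))"
  proof -
  interpret group G by fact
  note P = assms(2) and Q = assms(3)
  have A: "3 \<le> m \<and> is_chain G Ps m \<and> Ps 0 = P \<and> Ps 1 = Q \<longrightarrow>
            P \<otimes> Q \<noteq> Q \<otimes> P \<and>
            P \<otimes> (Q [^] (2::nat)) = (Q [^] (2::nat)) \<otimes> P \<and>
            (P [^] (2::nat)) \<otimes> Q = Q \<otimes> (P [^] (2::nat)) \<and>
            (\<forall>i\<le>m. (even i \<longrightarrow>
                        Ps i = inv ((P \<otimes> Q) [^] (i div 2)) \<otimes> P \<otimes> ((P \<otimes> Q) [^] (i div 2)) \<and>
                        Ps i [^] (2::nat) = P [^] (2::nat)) \<and>
                      (odd i \<longrightarrow>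
                        Ps i = inv ((P \<otimes> Q) [^] ((i - 1) div 2)) \<otimes> Q \<otimes> ((P \<otimes> Q) [^] ((i - 1) div 2)) \<and>
                        Ps i [^] (2::nat) = Q [^] (2::nat)))" for Ps :: "nat \<Rightarrow> 'a" and m
  proof
    assume h: "3 \<le> m \<and> is_chain G Ps m \<and> Ps 0 = P \<and> Ps 1 = Q"
    then have m: "3 \<le> m" and ch: "is_chain G Ps m" and P0: "Ps 0 = P" and P1: "Ps 1 = Q" by auto
    note a = part_a[OF P Q m ch P0 P1]
    have R: "\<forall>i\<le>m. (even i \<longrightarrow>
                        Ps i = inv ((P \<otimes> Q) [^] (i div 2)) \<otimes> P \<otimes> ((P \<otimes> Q) [^] (i div 2)) \<and>
                        Ps i [^] (2::nat) = P [^] (2::nat)) \<and>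
                      (odd i \<longrightarrow>
                        Ps i = inv ((P \<otimes> Q) [^] ((i - 1) div 2)) \<otimes> Q \<otimes> ((P \<otimes> Q) [^] ((i - 1) div 2)) \<and>
                        Ps i [^] (2::nat) = Q [^] (2::nat))"
    proof (intro allI impI)
      fix i assume i: "i \<le> m"
      have e: "Ps i = conj_seq G P Q i" using a(4)[OF i] .
      have E: "even i \<longrightarrow> Ps i = inv ((P \<otimes> Q) [^] (i div 2)) \<otimes> P \<otimes> ((P \<otimes> Q) [^] (i div 2)) \<and>
                        Ps i [^] (2::nat) = P [^] (2::nat)"
        using e key(2)[OF P Q a(2) a(3)] by (simp add: conj_seq_def Let_def)
      have d: "odd i \<Longrightarrow> (i - 1) div 2 = i div 2" by (auto elim!: oddE)
      have O: "odd i \<longrightarrow> Ps i = inv ((P \<otimes> Q) [^] ((i - 1) div 2)) \<otimes> Q \<otimes> ((P \<otimes> Q) [^] ((i - 1) div 2)) \<and>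
                        Ps i [^] (2::nat) = Q [^] (2::nat)"
        using e key(3)[OF P Q a(2) a(3)] d by (simp add: conj_seq_def Let_def)
      show "(even i \<longrightarrow>
                        Ps i = inv ((P \<otimes> Q) [^] (i div 2)) \<otimes> P \<otimes> ((P \<otimes> Q) [^] (i div 2)) \<and>
                        Ps i [^] (2::nat) = P [^] (2::nat)) \<and>
                      (odd i \<longrightarrow>
                        Ps i = inv ((P \<otimes> Q) [^] ((i - 1) div 2)) \<otimes> Q \<otimes> ((P \<otimes> Q) [^] ((i - 1) div 2)) \<and>
                        Ps i [^] (2::nat) = Q [^] (2::nat))" using E O by blast
    qed
    show "P \<otimes> Q \<noteq> Q \<otimes> P \<and>
            P \<otimes> (Q [^] (2::nat)) = (Q [^] (2::nat)) \<otimes> P \<and>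
            (P [^] (2::nat)) \<otimes> Q = Q \<otimes> (P [^] (2::nat)) \<and>
            (\<forall>i\<le>m. (even i \<longrightarrow>
                        Ps i = inv ((P \<otimes> Q) [^] (i div 2)) \<otimes> P \<otimes> ((P \<otimes> Q) [^] (i div 2)) \<and>
                        Ps i [^] (2::nat) = P [^] (2::nat)) \<and>
                      (odd i \<longrightarrow>
                        Ps i = inv ((P \<otimes> Q) [^] ((i - 1) div 2)) \<otimes> Q \<otimes> ((P \<otimes> Q) [^] ((i - 1) div 2)) \<and>
                        Ps i [^] (2::nat) = Q [^] (2::nat)))"
      using a(1,2,3) R by blast
  qed
  have B: "P \<otimes> Q \<noteq> Q \<otimes> P \<and>
          P \<otimes> (Q [^] (2::nat)) = (Q [^] (2::nat)) \<otimes> P \<and>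
          (P [^] (2::nat)) \<otimes> Q = Q \<otimes> (P [^] (2::nat)) \<longrightarrow>
          (\<forall>m::nat. 3 \<le> m \<longrightarrow>
             is_chain G (conj_seq G P Q) m \<and>
             conj_seq G P Q 0 = P \<and> conj_seq G P Q 1 = Q \<and>
             (\<forall>i\<le>m. (even i \<longrightarrow> conj_seq G P Q i [^] (2::nat) = P [^] (2::nat)) \<and>
                      (odd i \<longrightarrow> conj_seq G P Q i [^] (2::nat) = Q [^] (2::nat))))"
  proof (intro impI allI)
    fix m :: nat
    assume r: "P \<otimes> Q \<noteq> Q \<otimes> P \<and>
          P \<otimes> (Q [^] (2::nat)) = (Q [^] (2::nat)) \<otimes> P \<and>
          (P [^] (2::nat)) \<otimes> Q = Q \<otimes> (P [^] (2::nat))" and m: "3 \<le> m"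
    then have r1: "P \<otimes> Q \<noteq> Q \<otimes> P" and r2: "P \<otimes> (Q [^] (2::nat)) = (Q [^] (2::nat)) \<otimes> P"
      and r3: "(P [^] (2::nat)) \<otimes> Q = Q \<otimes> (P [^] (2::nat))" by auto
    have "is_chain G (conj_seq G P Q) m" using part_b[OF P Q r1 r2 r3] m by simp
    moreover have "conj_seq G P Q 0 = P" using cs_0[OF P] .
    moreover have "conj_seq G P Q 1 = Q" using cs_1[OF P Q] .
    moreover have "\<forall>i\<le>m. (even i \<longrightarrow> conj_seq G P Q i [^] (2::nat) = P [^] (2::nat)) \<and>
                      (odd i \<longrightarrow> conj_seq G P Q i [^] (2::nat) = Q [^] (2::nat))"
      using key(2,3)[OF P Q r2 r3] by blast
    ultimately show "is_chain G (conj_seq G P Q) m \<and>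
             conj_seq G P Q 0 = P \<and> conj_seq G P Q 1 = Q \<and>
             (\<forall>i\<le>m. (even i \<longrightarrow> conj_seq G P Q i [^] (2::nat) = P [^] (2::nat)) \<and>
                      (odd i \<longrightarrow> conj_seq G P Q i [^] (2::nat) = Q [^] (2::nat)))" by blast
  qed
  show ?thesis using A B by blast
qed

end
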